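(* Let $M$ be a $po$-$\Gamma$-semigroup. Then $M$ is completely regular if and only if for every $a\in M$ there exist $x\in M$ and $\gamma,\mu,\rho,\xi\in\Gamma$ such that $$a\le (a\gamma a)\mu x\rho (a\xi a).$$
   Context: A $po$-$\Gamma$-semigroup is a triple $(M,\Gamma,\le)$ where $M,\Gamma$ are nonempty sets with a map $M\times\Gamma\times M\to M$, $(a,\gamma,b)\mapsto a\gamma b$, satisfying $(a\gamma b)\mu c=a\gamma(b\mu c)$ for all $a,b,c\in M$, $\gamma,\mu\in\Gamma$, and $\le$ is a partial order on $M$ such that $a\le b$ implies $a\gamma c\le b\gamma c$ and $c\gamma a\le c\gamma b$ for all $c\in M$, $\gamma\in\Gamma$. For $A,B\subseteq M$, $A\Gamma B=\{a\gamma b: a\in A,\gamma\in\Gamma,b\in B\}$ (with $a\Gamma B$ meaning $\{a\}\Gamma B$, etc.), and $(A]=\{t\in M: t\le a \text{ for some } a\in A\}$. $M$ is regular if $a\in(a\Gamma M\Gamma a]$ for all $a\in M$; left regular if $a\in(M\Gamma a\Gamma a]$ for all $a\in M$; right regular if $a\in(a\Gamma a\Gamma M]$ for all $a\in M$; completely regular if it is regular, left regular and right regular. *)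

theory Defs
  imports Main
begin

definition po_gamma_semigroup ::
  "'a set \<Rightarrow> 'g set \<Rightarrow> ('a \<Rightarrow> 'g \<Rightarrow> 'a \<Rightarrow> 'a) \<Rightarrow> ('a \<Rightarrow> 'a \<Rightarrow> bool) \<Rightarrow> bool" where
  "po_gamma_semigroup M G op le \<longleftrightarrow>
     M \<noteq> {} \<and> G \<noteq> {} \<and>
     (\<forall>a\<in>M. \<forall>g\<in>G. \<forall>b\<in>M. op a g b \<in> M) \<and>
     (\<forall>a\<in>M. \<forall>b\<in>M. \<forall>c\<in>M. \<forall>g\<in>G. \<forall>m\<in>G. op (op a g b) m c = op a g (op b m c)) \<and>
     (\<forall>a\<in>M. le a a) \<and>
     (\<forall>a\<in>M. \<forall>b\<in>M. le a b \<and> le b a \<longrightarrow> a = b) \<and>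
     (\<forall>a\<in>M. \<forall>b\<in>M. \<forall>c\<in>M. le a b \<and> le b c \<longrightarrow> le a c) \<and>
     (\<forall>a\<in>M. \<forall>b\<in>M. le a b \<longrightarrow>
        (\<forall>c\<in>M. \<forall>g\<in>G. le (op a g c) (op b g c) \<and> le (op c g a) (op c g b)))"

definition down :: "'a set \<Rightarrow> ('a \<Rightarrow> 'a \<Rightarrow> bool) \<Rightarrow> 'a set \<Rightarrow> 'a set" where
  "down M le A = {t \<in> M. \<exists>a\<in>A. le t a}"

definition gprod :: "'g set \<Rightarrow> ('a \<Rightarrow> 'g \<Rightarrow> 'a \<Rightarrow> 'a) \<Rightarrow> 'a set \<Rightarrow> 'a set \<Rightarrow> 'a set" where
  "gprod G op A B = {op a g b | a g b. a \<in> A \<and> g \<in> G \<and> b \<in> B}"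

definition gregular where
  "gregular M G op le \<longleftrightarrow>
     (\<forall>a\<in>M. a \<in> down M le (gprod G op (gprod G op {a} M) {a}))"

definition left_gregular where
  "left_gregular M G op le \<longleftrightarrow>
     (\<forall>a\<in>M. a \<in> down M le (gprod G op (gprod G op M {a}) {a}))"

definition right_gregular where
  "right_gregular M G op le \<longleftrightarrow>
     (\<forall>a\<in>M. a \<in> down M le (gprod G op (gprod G op {a} {a}) M))"

definition completely_gregular where
  "completely_gregular M G op le \<longleftrightarrow>
     gregular M G op le \<and> left_gregular M G op le \<and> right_gregular M G op le"

end

theory Submission
  imports Defs
begin

theorem proposition3:
  fixes M :: "'a set" and G :: "'g set"
    and op :: "'a \<Rightarrow> 'g \<Rightarrow> 'a \<Rightarrow> 'a" and le :: "'a \<Rightarrow> 'a \<Rightarrow> bool"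
  assumes "po_gamma_semigroup M G op le"
  shows "completely_gregular M G op le \<longleftrightarrow>
    (\<forall>a\<in>M. \<exists>x\<in>M. \<exists>g\<in>G. \<exists>m\<in>G. \<exists>r\<in>G. \<exists>k\<in>G.
       le a (op (op (op a g a) m x) r (op a k a)))"
proof -
  note D = assms[unfolded po_gamma_semigroup_def]
  have cl[simp]: "\<And>a g b. a\<in>M \<Longrightarrow> g\<in>G \<Longrightarrow> b\<in>M \<Longrightarrow> op a g b \<in> M"
    using D[THEN conjunct2, THEN conjunct2, THEN conjunct1] by blast
  have as[simp]: "\<And>a b c g m. a\<in>M \<Longrightarrow> b\<in>M \<Longrightarrow> c\<in>M \<Longrightarrow> g\<in>G \<Longrightarrow> m\<in>G \<Longrightarrow>
      op (op a g b) m c = op a g (op b m c)"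
    using D[THEN conjunct2, THEN conjunct2, THEN conjunct2, THEN conjunct1] by blast
  have tr: "\<And>a b c. a\<in>M \<Longrightarrow> b\<in>M \<Longrightarrow> c\<in>M \<Longrightarrow> le a b \<Longrightarrow> le b c \<Longrightarrow> le a c"
    using D[THEN conjunct2, THEN conjunct2, THEN conjunct2, THEN conjunct2, THEN conjunct2, THEN conjunct2, THEN conjunct1] by blast
  have mr: "\<And>a b c g. a\<in>M \<Longrightarrow> b\<in>M \<Longrightarrow> c\<in>M \<Longrightarrow> g\<in>G \<Longrightarrow> le a b \<Longrightarrow> le (op a g c) (op b g c)"
    using D[THEN conjunct2, THEN conjunct2, THEN conjunct2, THEN conjunct2, THEN conjunct2, THEN conjunct2, THEN conjunct2] by blast
  have ml: "\<And>a b c g. a\<in>M \<Longrightarrow> b\<in>M \<Longrightarrow> c\<in>M \<Longrightarrow> g\<in>G \<Longrightarrow> le a b \<Longrightarrow> le (op c g a) (op c g b)"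
    using D[THEN conjunct2, THEN conjunct2, THEN conjunct2, THEN conjunct2, THEN conjunct2, THEN conjunct2, THEN conjunct2] by blast
  show ?thesis
  proof
    assume H: "completely_gregular M G op le"
    show "\<forall>a\<in>M. \<exists>x\<in>M. \<exists>g\<in>G. \<exists>m\<in>G. \<exists>r\<in>G. \<exists>k\<in>G.
       le a (op (op (op a g a) m x) r (op a k a))"
    proof
      fix a assume a: "a \<in> M"
      from H a obtain t g1 k1 where t: "t\<in>M" "g1\<in>G" "k1\<in>G" "le a (op (op a g1 t) k1 a)"
        unfolding completely_gregular_def gregular_def down_def gprod_def by blast
      from H a obtain y g2 k2 where y: "y\<in>M" "g2\<in>G" "k2\<in>G" "le a (op (op y g2 a) k2 a)"
        unfolding completely_gregular_def left_gregular_def down_def gprod_def by blast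
      from H a obtain z g3 k3 where z: "z\<in>M" "g3\<in>G" "k3\<in>G" "le a (op (op a g3 a) k3 z)"
        unfolding completely_gregular_def right_gregular_def down_def gprod_def by blast
      define b where "b = op (op y g2 a) k2 a"
      define p where "p = op a g1 t"
      define p' where "p' = op (op (op a g3 a) k3 z) g1 t"
      have bM: "b \<in> M" "p\<in>M" "p'\<in>M" using a t y z by (auto simp: b_def p_def p'_def simp del: as)
      have 1: "le (op p k1 a) (op p k1 b)" using ml[OF a bM(1) bM(2) t(3)] y(4) b_def by simp
      have 2: "le p p'" unfolding p_def p'_def
        using mr[of a "op (op a g3 a) k3 z" t g1] a t z by (simp del: as)
      have 3: "le (op p k1 b) (op p' k1 b)" using mr[OF bM(2) bM(3) bM(1) t(3) 2] .
      have "le a (op p' k1 b)"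
        using tr[OF a _ _ t(4)[folded p_def] tr[OF _ _ _ 1 3]] a bM t by simp
      moreover have "op p' k1 b = op (op (op a g3 a) k3 (op (op z g1 t) k1 y)) g2 (op a k2 a)"
        unfolding p'_def b_def using a t y z by simp
      ultimately show "\<exists>x\<in>M. \<exists>g\<in>G. \<exists>m\<in>G. \<exists>r\<in>G. \<exists>k\<in>G.
       le a (op (op (op a g a) m x) r (op a k a))"
        using a t y z
        apply -
        apply (rule bexI[of _ "op (op z g1 t) k1 y"], rule bexI[of _ g3], rule bexI[of _ k3], rule bexI[of _ g2], rule bexI[of _ k2])
        by (auto simp del: as)
    qed
  next
    assume H: "\<forall>a\<in>M. \<exists>x\<in>M. \<exists>g\<in>G. \<exists>m\<in>G. \<exists>r\<in>G. \<exists>k\<in>G.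
       le a (op (op (op a g a) m x) r (op a k a))"
    have "\<And>a. a \<in> M \<Longrightarrow> a \<in> down M le (gprod G op (gprod G op {a} M) {a})
      \<and> a \<in> down M le (gprod G op (gprod G op M {a}) {a})
      \<and> a \<in> down M le (gprod G op (gprod G op {a} {a}) M)"
    proof -
      fix a assume a: "a \<in> M"
      then obtain x g m r k where x: "x\<in>M" "g\<in>G" "m\<in>G" "r\<in>G" "k\<in>G"
        "le a (op (op (op a g a) m x) r (op a k a))" using H by blast
      let ?v = "op (op (op a g a) m x) r (op a k a)"
      have e1: "?v = op (op a g (op (op a m x) r a)) k a" using a x(1-5) by simp
      have e2: "?v = op (op (op (op a g a) m x) r a) k a" using a x(1-5) by simp
      have e3: "?v = op (op a g a) m (op (op x r a) k a)" using a x(1-5) by simp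
      have vM: "?v \<in> M" using a x by (simp del: as)
      have t1: "op (op a m x) r a \<in> M" "op (op (op a g a) m x) r a \<in> M" "op (op x r a) k a \<in> M" "op (op a g a) m x \<in> M"
        using a x(1-5) by (simp_all del: as)
      have d1: "?v \<in> gprod G op (gprod G op {a} M) {a}"
        unfolding gprod_def e1 using a x(1-5) t1 by blast
      have d2: "?v \<in> gprod G op (gprod G op M {a}) {a}"
        unfolding gprod_def e2 using a x(1-5) t1 by blast
      have d3: "?v \<in> gprod G op (gprod G op {a} {a}) M"
        unfolding gprod_def e3 using a x(1-5) t1 by blast
      show "a \<in> down M le (gprod G op (gprod G op {a} M) {a})
      \<and> a \<in> down M le (gprod G op (gprod G op M {a}) {a})
      \<and> a \<in> down M le (gprod G op (gprod G op {a} {a}) M)"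
        unfolding down_def using a x(6) d1 d2 d3 by blast
    qed
    then show "completely_gregular M G op le"
      unfolding completely_gregular_def gregular_def left_gregular_def right_gregular_def
      by blast
  qed
qed

end
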